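(* Fix $c>0$, $\lambda>1$ and one of the six models. For every $N$ and every $1\le N_1,N_2\le N-1$ with $N_1+N_2=N$, $$\mathbb{E}\big[\log Z(\mathbb{G}(N,\lfloor cN\rfloor))\big]\ge\mathbb{E}\big[\log Z(\mathbb{G}(N_1,\mathcal{M}_1))\big]+\mathbb{E}\big[\log Z(\mathbb{G}(N_2,\mathcal{M}_2))\big],$$ where $\mathcal{M}_1\sim\mathrm{Bi}(\lfloor cN\rfloor,N_1/N)$ and $\mathcal{M}_2=\lfloor cN\rfloor-\mathcal{M}_1\sim\mathrm{Bi}(\lfloor cN\rfloor,N_2/N)$.
   Context: Let $K\ge2$, $\chi=\{0,\dots,q-1\}$. $\mathbb{G}(n,m)$ on an $n$-element node set $V$: $m$ directed hyperedges chosen independently and uniformly from $V^K$. For a hypergraph $G=(V,E)$ with node potentials $H_i$ and edge potentials $H_e:\chi^K\to\mathbb{R}\cup\{-\infty\}$, $H(x)=\sum_iH_i(x_i)+\sum_{e\in E}H_e(x_e)$ and $Z(G)=\sum_{x\in\chi^V}\lambda^{H(x)}$, $\lambda^{-\infty}=0$. Models: Independent set ($K=2,q=2$, $H_i(1)=1,H_i(0)=0$, $H_e(1,1)=-\infty$, else $0$); MAX-CUT ($K=2,q=2$, $H_i\equiv0$, $H_e(x,y)=\mathbf 1[x\ne y]$); anti-ferromagnetic Ising ($K=2,q=2$, fixed $\beta>0,B\in\mathbb{R}$, $H_i(0)=-B,H_i(1)=B$, $H_e(x,y)=-\beta$ if $x=y$, $\beta$ otherwise); $q$-Coloring ($K=2$,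 $H_i\equiv0$, $H_e(x,y)=\mathbf 1[x\ne y]$); K-SAT ($q=2$, $H_i\equiv0$, independent uniform $a_e\in\{0,1\}^K$, $H_e(a_e)=0$, $1$ otherwise); NAE-K-SAT ($H_e(a_e)=H_e(\mathbf1-a_e)=0$, $1$ otherwise). $\mathrm{Bi}(n,\theta)$ is the binomial distribution. *)

theory Defs
  imports "HOL-Probability.Probability"
begin

text \<open>The six models. Parameters: Ising beta B; q-Coloring q; K-SAT K; NAE-K-SAT K.\<close>
datatype model = IndSet | MaxCut | Ising real real | Coloring nat | KSAT nat | NAESAT nat

fun mK :: "model \<Rightarrow> nat" where
  "mK (KSAT k) = k" | "mK (NAESAT k) = k" | "mK _ = 2"

fun mq :: "model \<Rightarrow> nat" where
  "mq (Coloring q) = q" | "mq _ = 2"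

fun valid_model :: "model \<Rightarrow> bool" where
  "valid_model (Ising \<beta> B) = (\<beta> > 0)"
| "valid_model (Coloring q) = (q \<ge> 2)"
| "valid_model (KSAT k) = (k \<ge> 2)"
| "valid_model (NAESAT k) = (k \<ge> 2)"
| "valid_model _ = True"

fun node_pot :: "model \<Rightarrow> nat \<Rightarrow> ereal" where
  "node_pot IndSet s = (if s = 1 then 1 else 0)"
| "node_pot (Ising \<beta> B) s = (if s = 0 then ereal (-B) else ereal B)"
| "node_pot _ s = 0"

text \<open>Random edge labels: the signs a_e \<in> {0,1}^K for (NAE-)K-SAT; a single dummy
  label otherwise.\<close>
fun labels :: "model \<Rightarrow> nat list set" where
  "labels (KSAT k) = {a. length a = k \<and> set a \<subseteq> {0,1}}"
| "labels (NAESAT k) = {a. length a = k \<and> set a \<subseteq> {0,1}}"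
| "labels _ = {[]}"

fun edge_pot :: "model \<Rightarrow> nat list \<Rightarrow> nat list \<Rightarrow> ereal" where
  "edge_pot IndSet a xs = (if xs = [1,1] then -\<infinity> else 0)"
| "edge_pot MaxCut a xs = (if xs ! 0 \<noteq> xs ! 1 then 1 else 0)"
| "edge_pot (Ising \<beta> B) a xs = (if xs ! 0 = xs ! 1 then ereal (-\<beta>) else ereal \<beta>)"
| "edge_pot (Coloring q) a xs = (if xs ! 0 \<noteq> xs ! 1 then 1 else 0)"
| "edge_pot (KSAT k) a xs = (if xs = a then 0 else 1)"
| "edge_pot (NAESAT k) a xs = (if xs = a \<or> xs = map (\<lambda>b. 1 - b) a then 0 else 1)"

definition lampow :: "real \<Rightarrow> ereal \<Rightarrow> real" where
  "lampow lam h = (if h = -\<infinity> then 0 else lam powr (real_of_ereal h))"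

text \<open>A directed hyperedge on V = {0..<n}: a tuple in V^K together with its random label.\<close>
definition edges :: "model \<Rightarrow> nat \<Rightarrow> (nat list \<times> nat list) set" where
  "edges M n = {e. length e = mK M \<and> set e \<subseteq> {0..<n}} \<times> labels M"

definition hamiltonian :: "model \<Rightarrow> nat \<Rightarrow> (nat list \<times> nat list) list \<Rightarrow> (nat \<Rightarrow> nat) \<Rightarrow> ereal" where
  "hamiltonian M n G x =
     (\<Sum>i<n. node_pot M (x i)) + sum_list (map (\<lambda>(e, a). edge_pot M a (map x e)) G)"

definition partition_fn :: "model \<Rightarrow> real \<Rightarrow> nat \<Rightarrow> (nat list \<times> nat list) list \<Rightarrow> real" where
  "partition_fn M lam n G =
     (\<Sum>x \<in> {0..<n} \<rightarrow>\<^sub>E {0..<mq M}. lampow lam (hamiltonian M n G x))"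

text \<open>G(n,m): m hyperedges (with their labels) chosen independently and uniformly,
  i.e. a uniformly random length-m sequence of edges.\<close>
definition rand_graph :: "model \<Rightarrow> nat \<Rightarrow> nat \<Rightarrow> (nat list \<times> nat list) list pmf" where
  "rand_graph M n m = pmf_of_set {G. length G = m \<and> set G \<subseteq> edges M n}"

definition ElogZ :: "model \<Rightarrow> real \<Rightarrow> nat \<Rightarrow> nat \<Rightarrow> real" where
  "ElogZ M lam n m = measure_pmf.expectation (rand_graph M n m) (\<lambda>G. ln (partition_fn M lam n G))"

end

theory Submission
  imports Defs
begin


fun seqE :: "'a set \<Rightarrow> ('a \<Rightarrow> real) \<Rightarrow> nat \<Rightarrow> ('a list \<Rightarrow> real) \<Rightarrow> real" where
  "seqE D w 0 F = F []"
| "seqE D w (Suc n) F = (\<Sum>e\<in>D. w e * seqE D w n (\<lambda>ss. F (e # ss)))"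

lemma seqE_cong:
  "(\<And>ss. set ss \<subseteq> D \<Longrightarrow> length ss = n \<Longrightarrow> F ss = G ss) \<Longrightarrow> seqE D w n F = seqE D w n G"
proof (induction n arbitrary: F G)
  case 0 then show ?case by simp
next
  case (Suc n)
  show ?case unfolding seqE.simps
    by (rule sum.cong[OF refl], rule arg_cong[where f="\<lambda>z. _ * z"], rule Suc.IH) (auto intro!: Suc.prems)
qed

lemma seqE_mono:
  assumes "\<And>e. e \<in> D \<Longrightarrow> w e \<ge> 0"
  shows "(\<And>ss. set ss \<subseteq> D \<Longrightarrow> length ss = n \<Longrightarrow> F ss \<le> G ss) \<Longrightarrow> seqE D w n F \<le> seqE D w n G"
proof (induction n arbitrary: F G)
  case 0 then show ?case by simp
next
  case (Suc n)
  show ?case unfolding seqE.simps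
    by (rule sum_mono, rule mult_left_mono, rule Suc.IH) (auto intro!: Suc.prems assms)
qed

lemma seqE_add: "seqE D w n (\<lambda>ss. F ss + G ss) = seqE D w n F + seqE D w n G"
  by (induction n arbitrary: F G) (simp_all add: sum.distrib distrib_left)

lemma seqE_cmult: "seqE D w n (\<lambda>ss. c * F ss) = c * seqE D w n F"
  by (induction n arbitrary: F) (simp_all add: sum_distrib_left mult.left_commute)

lemma seqE_const: "seqE D w n (\<lambda>ss. c) = c * (sum w D) ^ n"
  by (induction n) (simp_all add: sum_distrib_left sum_distrib_right mult_ac)

lemma seqE_sum: "finite I \<Longrightarrow> seqE D w n (\<lambda>ss. \<Sum>i\<in>I. F i ss) = (\<Sum>i\<in>I. seqE D w n (F i))"
  by (induction I rule: finite_induct) (simp_all add: seqE_const seqE_add)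

lemma seqE_image:
  "inj_on f D \<Longrightarrow> seqE (f ` D) w n F = seqE D (w \<circ> f) n (\<lambda>ss. F (map f ss))"
  by (induction n arbitrary: F) (simp_all add: sum.reindex)

lemma seqE_uniform:
  assumes "finite D"
  shows "seqE D (\<lambda>_. 1 / real (card D)) n F
       = (\<Sum>G\<in>{xs. set xs \<subseteq> D \<and> length xs = n}. F G) / real (card D) ^ n"
proof (induction n arbitrary: F)
  case 0
  have "{xs. set xs \<subseteq> D \<and> length xs = 0} = {[]}" by auto
  then show ?case by simp
next
  case (Suc n)
  have inj: "inj_on (\<lambda>(xs, n). n # xs) ({xs. set xs \<subseteq> D \<and> length xs = n} \<times> D)"
    by (auto simp: inj_on_def)
  have "(\<Sum>G\<in>{xs. set xs \<subseteq> D \<and> length xs = Suc n}. F G)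
      = (\<Sum>(xs, e)\<in>{xs. set xs \<subseteq> D \<and> length xs = n} \<times> D. F (e # xs))"
    unfolding lists_length_Suc_eq by (subst sum.reindex[OF inj]) (simp add: case_prod_unfold)
  also have "\<dots> = (\<Sum>e\<in>D. \<Sum>xs\<in>{xs. set xs \<subseteq> D \<and> length xs = n}. F (e # xs))"
    by (subst sum.cartesian_product[symmetric]) (rule sum.swap)
  finally show ?case
    by (simp add: Suc sum_divide_distrib[symmetric] sum_distrib_left)
qed



lemma pascal_sum:
  fixes f :: "nat \<Rightarrow> nat \<Rightarrow> real"
  shows "(\<Sum>k\<le>Suc m. real (Suc m choose k) * f k (Suc m - k))
    = (\<Sum>k\<le>m. real (m choose k) * f (Suc k) (m - k)) + (\<Sum>k\<le>m. real (m choose k) * f k (Suc (m - k)))"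
proof -
  have "(\<Sum>k\<le>Suc m. real (Suc m choose k) * f k (Suc m - k))
      = f 0 (Suc m) + (\<Sum>k\<le>m. real (Suc m choose Suc k) * f (Suc k) (m - k))"
    by (subst sum.atMost_Suc_shift) simp
  also have "\<dots> = (\<Sum>k\<le>m. real (m choose k) * f (Suc k) (m - k))
      + (f 0 (Suc m) + (\<Sum>k\<le>m. real (m choose Suc k) * f (Suc k) (m - k)))"
    by (simp add: distrib_right sum.distrib)
  also have "f 0 (Suc m) + (\<Sum>k\<le>m. real (m choose Suc k) * f (Suc k) (m - k))
      = (\<Sum>k\<le>Suc m. real (m choose k) * f k (Suc m - k))"
    by (subst sum.atMost_Suc_shift) simp
  also have "\<dots> = (\<Sum>k\<le>m. real (m choose k) * f k (Suc (m - k)))"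
    by (simp add: Suc_diff_le)
  finally show ?thesis .
qed

lemma seqE_union:
  assumes disj: "A \<inter> B = {}" and fin: "finite A" "finite B"
  shows "seqE (A \<union> B) (\<lambda>e. if e \<in> A then pa * wa e else pb * wb e) m
            (\<lambda>ss. H (filter (\<lambda>e. e \<in> A) ss) (filter (\<lambda>e. e \<notin> A) ss))
   = (\<Sum>k\<le>m. real (m choose k) * (pa^k * pb^(m-k) * seqE A wa k (\<lambda>G1. seqE B wb (m-k) (\<lambda>G2. H G1 G2))))"
proof (induction m arbitrary: H)
  case 0 then show ?case by simp
next
  case (Suc m)
  let ?w = "\<lambda>e. if e \<in> A then pa * wa e else pb * wb e"
  define T where "T H k j = seqE A wa k (\<lambda>G1. seqE B wb j (\<lambda>G2. H G1 G2))" for H k j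
  have "seqE (A \<union> B) ?w (Suc m) (\<lambda>ss. H (filter (\<lambda>e. e \<in> A) ss) (filter (\<lambda>e. e \<notin> A) ss))
     = (\<Sum>e\<in>A. pa * wa e * seqE (A \<union> B) ?w m (\<lambda>ss. H (e # filter (\<lambda>e. e \<in> A) ss) (filter (\<lambda>e. e \<notin> A) ss)))
     + (\<Sum>e\<in>B. pb * wb e * seqE (A \<union> B) ?w m (\<lambda>ss. H (filter (\<lambda>e. e \<in> A) ss) (e # filter (\<lambda>e. e \<notin> A) ss)))"
    using disj fin by (simp add: sum.union_disjoint) (rule sum.cong, auto)
  also have "\<dots> = (\<Sum>e\<in>A. pa * wa e * (\<Sum>k\<le>m. real (m choose k) * (pa^k * pb^(m-k) * T (\<lambda>G1 G2. H (e # G1) G2) k (m-k))))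
     + (\<Sum>e\<in>B. pb * wb e * (\<Sum>k\<le>m. real (m choose k) * (pa^k * pb^(m-k) * T (\<lambda>G1 G2. H G1 (e # G2)) k (m-k))))"
  proof -
    have h1: "seqE (A \<union> B) ?w m (\<lambda>ss. H (e # filter (\<lambda>e. e \<in> A) ss) (filter (\<lambda>e. e \<notin> A) ss))
       = (\<Sum>k\<le>m. real (m choose k) * (pa^k * pb^(m-k) * T (\<lambda>G1 G2. H (e # G1) G2) k (m-k)))" for e
      unfolding T_def by (rule Suc.IH[of "\<lambda>G1 G2. H (e # G1) G2"])
    have h2: "seqE (A \<union> B) ?w m (\<lambda>ss. H (filter (\<lambda>e. e \<in> A) ss) (e # filter (\<lambda>e. e \<notin> A) ss))
       = (\<Sum>k\<le>m. real (m choose k) * (pa^k * pb^(m-k) * T (\<lambda>G1 G2. H G1 (e # G2)) k (m-k)))" for e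
      unfolding T_def by (rule Suc.IH[of "\<lambda>G1 G2. H G1 (e # G2)"])
    show ?thesis unfolding h1 h2 ..
  qed
  also have "(\<Sum>e\<in>A. pa * wa e * (\<Sum>k\<le>m. real (m choose k) * (pa^k * pb^(m-k) * T (\<lambda>G1 G2. H (e # G1) G2) k (m-k))))
      = (\<Sum>k\<le>m. real (m choose k) * (pa^Suc k * pb^(m-k) * T H (Suc k) (m-k)))"
    unfolding T_def seqE.simps
    by (simp add: sum_distrib_left sum_distrib_right mult_ac) (rule sum.swap)
  also have "(\<Sum>e\<in>B. pb * wb e * (\<Sum>k\<le>m. real (m choose k) * (pa^k * pb^(m-k) * T (\<lambda>G1 G2. H G1 (e # G2)) k (m-k))))
      = (\<Sum>k\<le>m. real (m choose k) * (pa^k * pb^Suc (m-k) * T H k (Suc (m-k))))"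
  proof -
    have "T H k (Suc j) = (\<Sum>e\<in>B. wb e * T (\<lambda>G1 G2. H G1 (e # G2)) k j)" for k j
      unfolding T_def seqE.simps
      by (simp add: seqE_sum[OF fin(2)] seqE_cmult)
    then show ?thesis
      by (simp add: sum_distrib_left sum_distrib_right mult_ac) (rule sum.swap)
  qed
  finally show ?case
    using pascal_sum[of m "\<lambda>k j. pa^k * pb^j * T H k j"] unfolding T_def by simp
qed



fun nodeval :: "model \<Rightarrow> nat \<Rightarrow> real" where
  "nodeval IndSet s = (if s = 1 then 1 else 0)"
| "nodeval (Ising \<beta> B) s = (if s = 0 then -B else B)"
| "nodeval _ s = 0"

fun bad :: "model \<Rightarrow> nat list \<Rightarrow> nat list \<Rightarrow> real" where
  "bad IndSet a xs = of_bool (xs = [1,1])"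
| "bad (KSAT k) a xs = of_bool (xs = a)"
| "bad (NAESAT k) a xs = of_bool (xs = a \<or> xs = map (\<lambda>b. 1 - b) a)"
| "bad _ a xs = of_bool (xs ! 0 = xs ! 1)"

fun Cf :: "model \<Rightarrow> real \<Rightarrow> real" where
  "Cf IndSet lam = 1"
| "Cf (Ising \<beta> B) lam = lam powr \<beta>"
| "Cf _ lam = lam"

fun df :: "model \<Rightarrow> real \<Rightarrow> real" where
  "df IndSet lam = 1"
| "df (Ising \<beta> B) lam = 1 - lam powr (-2*\<beta>)"
| "df _ lam = 1 - 1 / lam"

definition fac :: "model \<Rightarrow> real \<Rightarrow> nat list \<Rightarrow> nat list \<Rightarrow> real" where
  "fac M lam a xs = Cf M lam * (1 - df M lam * bad M a xs)"

definition wgt :: "model \<Rightarrow> real \<Rightarrow> nat \<Rightarrow> (nat list \<times> nat list) list \<Rightarrow> (nat \<Rightarrow> nat) \<Rightarrow> real" where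
  "wgt M lam n L x = lam powr (\<Sum>i<n. nodeval M (x i)) * prod_list (map (\<lambda>(e,a). fac M lam a (map x e)) L)"

definition cfg :: "model \<Rightarrow> nat \<Rightarrow> (nat \<Rightarrow> nat) set" where
  "cfg M n = {0..<n} \<rightarrow>\<^sub>E {0..<mq M}"

lemma node_pot_eq: "node_pot M s = ereal (nodeval M s)"
  by (cases M) auto

lemma edge_pot_ne: "edge_pot M a xs \<noteq> \<infinity>"
  by (cases M) auto

lemma bad_01: "bad M a xs = 0 \<or> bad M a xs = 1"
  by (cases M) auto

lemma bad_nonneg: "bad M a xs \<ge> 0" and bad_le1: "bad M a xs \<le> 1"
  using bad_01[of M a xs] by auto

lemma Cf_pos: "lam > 1 \<Longrightarrow> Cf M lam > 0"
  by (cases M) auto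

lemma df_nonneg: "valid_model M \<Longrightarrow> lam > 1 \<Longrightarrow> df M lam \<ge> 0"
  by (cases M) (auto simp: powr_minus field_simps ge_one_powr_ge_zero)

lemma df_le1: "lam > 1 \<Longrightarrow> df M lam \<le> 1"
  by (cases M) auto

lemma df_lt1: "lam > 1 \<Longrightarrow> M \<noteq> IndSet \<Longrightarrow> df M lam < 1"
  by (cases M) auto

lemma fac_nonneg: "valid_model M \<Longrightarrow> lam > 1 \<Longrightarrow> fac M lam a xs \<ge> 0"
  unfolding fac_def using Cf_pos[of lam M] df_le1[of lam M] df_nonneg[of M lam] bad_le1[of M a xs] bad_nonneg[of M a xs]
  by (intro mult_nonneg_nonneg) (auto intro!: mult_le_one)

lemma fac_pos: "valid_model M \<Longrightarrow> lam > 1 \<Longrightarrow> (M \<noteq> IndSet \<or> bad M a xs = 0) \<Longrightarrow> fac M lam a xs > 0"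
  unfolding fac_def using Cf_pos[of lam M] df_lt1[of lam M] df_nonneg[of M lam] bad_le1[of M a xs] bad_nonneg[of M a xs]
  apply (intro mult_pos_pos, simp)
  apply (elim disjE)
  using mult_le_one[of "df M lam" "bad M a xs"]
   apply (smt (verit, best) mult_left_le)
  by simp

lemma prod_list_pos: "(\<And>y. y \<in> set ys \<Longrightarrow> y > (0::real)) \<Longrightarrow> prod_list ys > 0"
  by (induction ys) auto

lemma lampow_edge:
  assumes "lam > 1"
  shows "lampow lam (edge_pot M a xs) = fac M lam a xs"
  using assms
  by (cases M) (auto simp: lampow_def fac_def powr_minus field_simps powr_add[symmetric])

lemma lampow_add:
  assumes "lam > 0" "a \<noteq> \<infinity>" "b \<noteq> \<infinity>"
  shows "lampow lam (a + b) = lampow lam a * lampow lam b"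
  using assms by (cases a; cases b) (auto simp: lampow_def powr_add)

lemma sum_list_ne_inf: "(\<And>y. y \<in> set ys \<Longrightarrow> y \<noteq> (\<infinity>::ereal)) \<Longrightarrow> sum_list ys \<noteq> \<infinity>"
proof (induction ys)
  case Nil then show ?case by simp
next
  case (Cons y ys)
  then have "y \<noteq> \<infinity>" "sum_list ys \<noteq> \<infinity>" by auto
  then show ?case by (cases y; cases "sum_list ys") auto
qed

lemma lampow_ham_aux:
  assumes "lam > 1"
  shows "lampow lam (ereal c + sum_list (map (\<lambda>(e, a). edge_pot M a (map x e)) L))
       = lam powr c * prod_list (map (\<lambda>(e,a). fac M lam a (map x e)) L)"
proof (induction L)
  case Nil then show ?case by (simp add: lampow_def)
next
  case (Cons p L)
  obtain e a where p: "p = (e, a)" by (cases p)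
  let ?S = "sum_list (map (\<lambda>(e, a). edge_pot M a (map x e)) L)"
  have S: "?S \<noteq> \<infinity>" by (rule sum_list_ne_inf) (auto simp: edge_pot_ne)
  have "ereal c + sum_list (map (\<lambda>(e, a). edge_pot M a (map x e)) (p # L))
      = edge_pot M a (map x e) + (ereal c + ?S)"
    by (simp add: p add_ac)
  moreover have "ereal c + ?S \<noteq> \<infinity>" using S by (cases ?S) auto
  ultimately show ?case
    using assms Cons by (simp add: lampow_add edge_pot_ne lampow_edge p)
qed

lemma lampow_ham:
  assumes "lam > 1"
  shows "lampow lam (hamiltonian M n L x) = wgt M lam n L x"
proof -
  have "(\<Sum>i<n. node_pot M (x i)) = ereal (\<Sum>i<n. nodeval M (x i))"
    by (simp add: node_pot_eq)
  then show ?thesis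
    unfolding hamiltonian_def wgt_def using lampow_ham_aux[OF assms] by simp
qed

lemma Z_eq:
  assumes "lam > 1"
  shows "partition_fn M lam n L = (\<Sum>x\<in>cfg M n. wgt M lam n L x)"
  unfolding partition_fn_def cfg_def using lampow_ham[OF assms] by simp

lemma wgt_nonneg: "valid_model M \<Longrightarrow> lam > 1 \<Longrightarrow> wgt M lam n L x \<ge> 0"
  unfolding wgt_def using fac_nonneg[of M lam]
  by (intro mult_nonneg_nonneg) (auto intro!: prod_list_nonneg)

lemma finite_cfg: "finite (cfg M n)"
  unfolding cfg_def by (simp add: finite_PiE)

lemma mq_pos: "valid_model M \<Longrightarrow> mq M \<ge> 1"
  by (cases M) auto

lemma Z_pos:
  assumes "valid_model M" "lam > 1" "\<And>e a. (e, a) \<in> set L \<Longrightarrow> set e \<subseteq> {0..<n}"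
  shows "partition_fn M lam n L > 0"
proof -
  define x0 where "x0 = (\<lambda>i\<in>{0..<n}. 0::nat)"
  have x0: "x0 \<in> cfg M n" using mq_pos[OF assms(1)] unfolding x0_def cfg_def by auto
  have "wgt M lam n L x0 > 0"
    unfolding wgt_def
  proof (intro mult_pos_pos)
    show "lam powr (\<Sum>i<n. nodeval M (x0 i)) > 0" using assms by simp
    show "prod_list (map (\<lambda>(e, a). fac M lam a (map x0 e)) L) > 0"
    proof (rule prod_list_pos, clarsimp)
      fix e a assume ea: "(e, a) \<in> set L"
      have "map x0 e = replicate (length e) 0"
        using assms(3)[OF ea] unfolding x0_def by (auto intro!: nth_equalityI simp: subset_iff)
      then have "M \<noteq> IndSet \<or> bad M a (map x0 e) = 0" by (cases M) auto
      then show "fac M lam a (map x0 e) > 0" using fac_pos assms by blast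
    qed
  qed
  then show ?thesis
    unfolding Z_eq[OF assms(2)]
    using x0 finite_cfg wgt_nonneg[OF assms(1,2)]
    by (metis (no_types, lifting) sum_pos2)
qed



lemma lists_prod_sum:
  assumes "finite D"
  shows "(\<Sum>e\<in>{xs. set xs \<subseteq> D \<and> length xs = K}. prod_list (map (f::nat \<Rightarrow> real) e)) = (sum f D) ^ K"
proof (induction K)
  case 0
  have "{xs. set xs \<subseteq> D \<and> length xs = 0} = {[]}" by auto
  then show ?case by simp
next
  case (Suc K)
  have inj: "inj_on (\<lambda>(xs, n). n # xs) ({xs. set xs \<subseteq> D \<and> length xs = K} \<times> D)"
    by (auto simp: inj_on_def)
  have "(\<Sum>e\<in>{xs. set xs \<subseteq> D \<and> length xs = Suc K}. prod_list (map f e))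
      = (\<Sum>(xs, i)\<in>{xs. set xs \<subseteq> D \<and> length xs = K} \<times> D. f i * prod_list (map f xs))"
    unfolding lists_length_Suc_eq by (subst sum.reindex[OF inj]) (simp add: case_prod_unfold)
  also have "\<dots> = sum f D * (\<Sum>e\<in>{xs. set xs \<subseteq> D \<and> length xs = K}. prod_list (map f e))"
    apply (simp add: sum.cartesian_product[symmetric] sum_product mult.commute)
    by (rule sum.swap)
  finally show ?case using Suc by simp
qed

lemma lists_prod_zip:
  assumes "finite B"
  shows "(\<Sum>a\<in>{xs. set xs \<subseteq> B \<and> length xs = length e}. prod_list (map2 (g::'a \<Rightarrow> 'b \<Rightarrow> real) e a))
       = prod_list (map (\<lambda>i. \<Sum>b\<in>B. g i b) e)"
proof (induction e)
  case Nil
  have "{xs. set xs \<subseteq> B \<and> length xs = 0} = {[]}" by auto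
  then show ?case by simp
next
  case (Cons i e)
  have inj: "inj_on (\<lambda>(xs, n). n # xs) ({xs. set xs \<subseteq> B \<and> length xs = length e} \<times> B)"
    by (auto simp: inj_on_def)
  have "(\<Sum>a\<in>{xs. set xs \<subseteq> B \<and> length xs = length (i # e)}. prod_list (map2 g (i # e) a))
      = (\<Sum>(xs, b)\<in>{xs. set xs \<subseteq> B \<and> length xs = length e} \<times> B. g i b * prod_list (map2 g e xs))"
    unfolding length_Cons lists_length_Suc_eq by (subst sum.reindex[OF inj]) (simp add: case_prod_unfold)
  also have "\<dots> = (\<Sum>b\<in>B. g i b) * (\<Sum>a\<in>{xs. set xs \<subseteq> B \<and> length xs = length e}. prod_list (map2 g e a))"
    apply (simp add: sum.cartesian_product[symmetric] sum_product mult.commute)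
    by (rule sum.swap)
  finally show ?case using Cons by simp
qed

lemma prod_of_bool: "finite A \<Longrightarrow> (\<Prod>l\<in>A. (of_bool (Q l)::real)) = of_bool (\<forall>l\<in>A. Q l)"
  by (induction A rule: finite_induct) auto

lemma prod_of_bool_lessThan: "(\<Prod>l<(r::nat). (of_bool (Q l)::real)) = of_bool (\<forall>l<r. Q l)"
  by (induction r) (auto simp: less_Suc_eq)

lemma prod_list_of_bool_zip:
  "length a = length e \<Longrightarrow> prod_list (map2 (\<lambda>i b. (of_bool (Q i b)::real)) e a) = of_bool (\<forall>j<length e. Q (e!j) (a!j))"
proof (induction e arbitrary: a)
  case Nil then show ?case by simp
next
  case (Cons i e)
  then obtain b a' where a: "a = b # a'" and len: "length a' = length e" by (cases a) auto
  have "(\<forall>j<length (i # e). Q ((i # e) ! j) (a ! j)) \<longleftrightarrow> Q i b \<and> (\<forall>j<length e. Q (e ! j) (a' ! j))"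
    unfolding a by (auto simp: less_Suc_eq_0_disj)
  then show ?case using Cons.IH[OF len] by (simp add: a)
qed

lemma prod_list_map_cmult: "prod_list (map (\<lambda>i. c * f i) e) = (c::real) ^ length e * prod_list (map f e)"
  by (induction e) auto

definition fb :: "nat \<Rightarrow> nat \<Rightarrow> nat" where "fb s b = (if s = 0 then b else 1 - b)"

lemma prod_match:
  fixes r :: nat
  assumes "length a = length e"
  shows "(\<Prod>l<r. (of_bool (map (X l) e = map (fb (\<sigma> l)) a)::real))
       = prod_list (map2 (\<lambda>i b. of_bool (\<forall>l<r. X l i = fb (\<sigma> l) b)) e a)"
proof -
  have "(\<Prod>l<r. (of_bool (map (X l) e = map (fb (\<sigma> l)) a)::real)) = of_bool (\<forall>l<r. map (X l) e = map (fb (\<sigma> l)) a)"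
    by (rule prod_of_bool_lessThan)
  also have "(\<forall>l<r. map (X l) e = map (fb (\<sigma> l)) a) \<longleftrightarrow> (\<forall>j<length e. \<forall>l<r. X l (e!j) = fb (\<sigma> l) (a!j))"
    using assms by (auto simp: list_eq_iff_nth_eq)
  finally show ?thesis using prod_list_of_bool_zip[OF assms] by simp
qed

type_synonym dec = "(nat \<Rightarrow> nat) set \<times> ((nat \<Rightarrow> nat) \<Rightarrow> real) \<times> ((nat \<Rightarrow> nat) \<Rightarrow> nat \<Rightarrow> real)"

definition good_dec :: "model \<Rightarrow> nat set \<Rightarrow> nat \<Rightarrow> (nat \<Rightarrow> nat \<Rightarrow> nat) \<Rightarrow> (nat \<Rightarrow> nat) set \<Rightarrow> ((nat \<Rightarrow> nat) \<Rightarrow> real) \<Rightarrow> ((nat \<Rightarrow> nat) \<Rightarrow> nat \<Rightarrow> real) \<Rightarrow> bool" where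
  "good_dec M D r X T wt \<phi> \<longleftrightarrow> finite T \<and> (\<forall>t\<in>T. wt t \<ge> 0) \<and> (\<forall>t\<in>T. \<forall>i. \<phi> t i \<ge> 0) \<and>
     (\<forall>e. length e = mK M \<and> set e \<subseteq> D \<longrightarrow>
        (\<Sum>a\<in>labels M. \<Prod>l<r. bad M a (map (X l) e)) = real (card (labels M)) * (\<Sum>t\<in>T. wt t * prod_list (map (\<phi> t) e)))"

lemma length2: "length e = 2 \<Longrightarrow> \<exists>u v. e = [u, v]"
  by (cases e; cases "tl e") auto

lemma dec_indset: "\<exists>T wt \<phi>. good_dec IndSet D r X T wt \<phi>"
proof -
  define \<phi> where "\<phi> t i = (\<Prod>l<r. (of_bool (X l i = 1)::real))" for t :: "nat \<Rightarrow> nat" and i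
  have "good_dec IndSet D r X {\<lambda>_. 0} (\<lambda>_. 1) \<phi>"
    unfolding good_dec_def
  proof (intro conjI allI impI ballI)
    fix e :: "nat list" assume "length e = mK IndSet \<and> set e \<subseteq> D"
    then obtain u v where e: "e = [u, v]" using length2 by force
    have "(\<Prod>l<r. (of_bool ([X l u, X l v] = [1, 1])::real)) = (\<Prod>l<r. of_bool (X l u = 1) * of_bool (X l v = 1))"
      by (rule prod.cong) auto
    then show "(\<Sum>a\<in>labels IndSet. \<Prod>l<r. bad IndSet a (map (X l) e)) =
         real (card (labels IndSet)) * (\<Sum>t\<in>{\<lambda>_. 0}. 1 * prod_list (map (\<phi> t) e))"
      by (simp add: e \<phi>_def prod.distrib)
  qed (auto simp: \<phi>_def intro!: prod_nonneg)
  then show ?thesis by blast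
qed

lemma dec_pair:
  assumes "M = MaxCut \<or> M = Ising \<beta> B \<or> M = Coloring q" and fin: "finite D"
  shows "\<exists>T wt \<phi>. good_dec M D r X T wt \<phi>"
proof -
  define P where "P i = (\<lambda>l. if l < r then X l i else 0)" for i
  define \<phi> where "\<phi> s i = (of_bool (P i = s)::real)" for s :: "nat \<Rightarrow> nat" and i
  have bad: "bad M a xs = of_bool (xs ! 0 = xs ! 1)" for a xs using assms(1) by auto
  have lab: "labels M = {[]}" "mK M = 2" using assms(1) by auto
  have "good_dec M D r X (P ` D) (\<lambda>_. 1) \<phi>"
    unfolding good_dec_def
  proof (intro conjI allI impI ballI)
    fix e :: "nat list" assume "length e = mK M \<and> set e \<subseteq> D"
    then obtain u v where e: "e = [u, v]" and uv: "u \<in> D" "v \<in> D" using length2 lab by force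
    have "(\<Prod>l<r. (of_bool (X l u = X l v)::real)) = of_bool (\<forall>l<r. X l u = X l v)"
      by (rule prod_of_bool_lessThan)
    also have "(\<forall>l<r. X l u = X l v) \<longleftrightarrow> P u = P v" by (auto simp: P_def fun_eq_iff)
    also have "(of_bool (P u = P v)::real) = (\<Sum>s\<in>P ` D. of_bool (P u = s) * of_bool (P v = s))"
    proof -
      have "(\<Sum>s\<in>P ` D. (of_bool (P u = s) * of_bool (P v = s)::real)) = (\<Sum>s\<in>P ` D. if P u = s then of_bool (P v = s) else 0)"
        by (rule sum.cong) auto
      also have "\<dots> = of_bool (P v = P u)" using uv fin by (subst sum.delta') auto
      finally show ?thesis by auto
    qed
    finally show "(\<Sum>a\<in>labels M. \<Prod>l<r. bad M a (map (X l) e)) =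
         real (card (labels M)) * (\<Sum>t\<in>P ` D. 1 * prod_list (map (\<phi> t) e))"
      by (simp add: e \<phi>_def lab bad)
  qed (auto simp: \<phi>_def fin)
  then show ?thesis by blast
qed

lemma labels_sat: "M = KSAT k \<or> M = NAESAT k \<Longrightarrow> labels M = {xs. set xs \<subseteq> {0,1} \<and> length xs = k}"
  by auto

lemma card_labels_sat: "M = KSAT k \<or> M = NAESAT k \<Longrightarrow> card (labels M) = 2 ^ k"
  by (simp add: labels_sat card_lists_length_eq numeral_2_eq_2)

lemma dec_ksat:
  shows "\<exists>T wt \<phi>. good_dec (KSAT k) D r X T wt \<phi>"
proof -
  define \<phi> where "\<phi> t i = (1/2) * (\<Sum>b\<in>{0,1}. (of_bool (\<forall>l<r. X l i = fb 0 b)::real))" for t :: "nat \<Rightarrow> nat" and i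
  have "good_dec (KSAT k) D r X {\<lambda>_. 0} (\<lambda>_. 1) \<phi>"
    unfolding good_dec_def
  proof (intro conjI allI impI ballI)
    fix e :: "nat list" assume e: "length e = mK (KSAT k) \<and> set e \<subseteq> D"
    have fb0: "map (fb 0) a = a" for a by (simp add: fb_def map_idI)
    have "(\<Sum>a\<in>labels (KSAT k). \<Prod>l<r. bad (KSAT k) a (map (X l) e))
        = (\<Sum>a\<in>{xs. set xs \<subseteq> {0,1} \<and> length xs = length e}. prod_list (map2 (\<lambda>i b. of_bool (\<forall>l<r. X l i = fb 0 b)) e a))"
      using e prod_match[where e=e and r=r and X=X and \<sigma>="\<lambda>_. 0"] by (intro sum.cong) (auto simp: fb0)
    also have "\<dots> = prod_list (map (\<lambda>i. \<Sum>b\<in>{0,1}. (of_bool (\<forall>l<r. X l i = fb 0 b)::real)) e)"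
      by (rule lists_prod_zip) simp
    also have "\<dots> = 2 ^ k * prod_list (map (\<phi> (\<lambda>_. 0)) e)"
      using e unfolding \<phi>_def prod_list_map_cmult by (simp add: power_one_over)
    moreover have c: "real (card (labels (KSAT k))) = 2^k" using card_labels_sat[of "KSAT k" k] by simp
    ultimately show "(\<Sum>a\<in>labels (KSAT k). \<Prod>l<r. bad (KSAT k) a (map (X l) e)) =
         real (card (labels (KSAT k))) * (\<Sum>t\<in>{\<lambda>_. 0}. 1 * prod_list (map (\<phi> t) e))"
      unfolding c by simp
  qed (auto simp: \<phi>_def)
  then show ?thesis by blast
qed

lemma dec_nae:
  assumes "k \<ge> 2"
  shows "\<exists>T wt \<phi>. good_dec (NAESAT k) D r X T wt \<phi>"
proof -
  define S where "S = PiE {..<r} (\<lambda>_. {0,1::nat})"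
  define \<phi> where "\<phi> \<sigma> i = (1/2) * (\<Sum>b\<in>{0,1}. (of_bool (\<forall>l<r. X l i = fb (\<sigma> l) b)::real))" for \<sigma> :: "nat \<Rightarrow> nat" and i
  have finS: "finite S" unfolding S_def by (simp add: finite_PiE)
  have "good_dec (NAESAT k) D r X S (\<lambda>_. 1) \<phi>"
    unfolding good_dec_def
  proof (intro conjI allI impI ballI finS)
    fix e :: "nat list" assume e: "length e = mK (NAESAT k) \<and> set e \<subseteq> D"
    let ?L = "{xs. set xs \<subseteq> {0,1::nat} \<and> length xs = length e}"
    have badsplit: "bad (NAESAT k) a xs = (\<Sum>s\<in>{0,1::nat}. of_bool (xs = map (fb s) a))" if a: "a \<in> ?L" for a xs
    proof -
      have "a \<noteq> map (\<lambda>b. 1 - b) a"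
      proof
        assume h: "a = map (\<lambda>b. 1 - b) a"
        have "length a \<ge> 1" using a e assms by auto
        then have "a ! 0 = 1 - a ! 0" using h by (metis nth_map One_nat_def le_less_trans less_one not_le)
        moreover have "a ! 0 \<in> set a" using \<open>length a \<ge> 1\<close> by (cases a) auto
        then have "a ! 0 \<in> {0,1}" using a by auto
        ultimately show False by auto
      qed
      moreover have m: "map (fb 0) a = a" "map (fb 1) a = map (\<lambda>b. 1 - b) a" by (auto simp: fb_def map_idI)
      have two: "(\<Sum>s\<in>{0,1::nat}. g s) = g 0 + g 1" for g :: "nat \<Rightarrow> real" by simp
      have "(\<Sum>s\<in>{0,1::nat}. (of_bool (xs = map (fb s) a)::real)) = of_bool (xs = a) + of_bool (xs = map (\<lambda>b. 1 - b) a)"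
        using two[of "\<lambda>s. of_bool (xs = map (fb s) a)"] unfolding m .
      ultimately show ?thesis by auto
    qed
    have "(\<Sum>a\<in>labels (NAESAT k). \<Prod>l<r. bad (NAESAT k) a (map (X l) e))
        = (\<Sum>a\<in>?L. \<Prod>l<r. \<Sum>s\<in>{0,1::nat}. of_bool (map (X l) e = map (fb s) a))"
    proof (rule sum.cong)
      show "labels (NAESAT k) = ?L" using e by auto
    next
      fix a assume "a \<in> ?L"
      then show "(\<Prod>l<r. bad (NAESAT k) a (map (X l) e)) = (\<Prod>l<r. \<Sum>s\<in>{0,1::nat}. of_bool (map (X l) e = map (fb s) a))"
        by (intro prod.cong refl badsplit)
    qed
    also have "\<dots> = (\<Sum>a\<in>?L. \<Sum>\<sigma>\<in>S. \<Prod>l<r. of_bool (map (X l) e = map (fb (\<sigma> l)) a))"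
      unfolding S_def by (intro sum.cong refl prod_sum_PiE) auto
    also have "\<dots> = (\<Sum>\<sigma>\<in>S. \<Sum>a\<in>?L. prod_list (map2 (\<lambda>i b. of_bool (\<forall>l<r. X l i = fb (\<sigma> l) b)) e a))"
      by (subst sum.swap) (intro sum.cong refl prod_match, auto)
    also have "\<dots> = (\<Sum>\<sigma>\<in>S. prod_list (map (\<lambda>i. \<Sum>b\<in>{0,1}. (of_bool (\<forall>l<r. X l i = fb (\<sigma> l) b)::real)) e))"
      by (intro sum.cong refl lists_prod_zip) simp
    also have "\<dots> = (\<Sum>\<sigma>\<in>S. 2 ^ k * prod_list (map (\<phi> \<sigma>) e))"
      using e unfolding \<phi>_def prod_list_map_cmult by (intro sum.cong refl) (simp add: power_one_over)
    moreover have c: "real (card (labels (NAESAT k))) = 2^k" using card_labels_sat[of "NAESAT k" k] by simp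
    ultimately show "(\<Sum>a\<in>labels (NAESAT k). \<Prod>l<r. bad (NAESAT k) a (map (X l) e)) =
         real (card (labels (NAESAT k))) * (\<Sum>t\<in>S. 1 * prod_list (map (\<phi> t) e))"
      unfolding c by (simp add: sum_distrib_left)
  qed (auto simp: \<phi>_def)
  then show ?thesis by blast
qed

lemma decomp:
  assumes "valid_model M" "finite D"
  shows "\<exists>T wt \<phi>. good_dec M D r X T wt \<phi>"
  using assms dec_indset dec_pair dec_ksat dec_nae by (cases M) auto



lemma convex_pow:
  fixes u v a :: real
  assumes "0 \<le> a" "a \<le> 1" "0 \<le> u" "0 \<le> v"
  shows "(a * u + (1 - a) * v) ^ K \<le> a * u ^ K + (1 - a) * v ^ K"
proof -
  have cv: "convex_on {0::real..} (\<lambda>x. x ^ K)"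
  proof (cases "even K")
    case True show ?thesis by (rule convex_on_subset[OF convex_power_even[OF True]]) auto
  next
    case False then show ?thesis using convex_power_odd[of K] by simp
  qed
  from convex_onD[OF cv, of "1 - a" u v] assms show ?thesis by (simp add: algebra_simps)
qed

lemma labels_cases: "labels M = {[]} \<or> (\<exists>k. labels M = {xs. set xs \<subseteq> {0,1} \<and> length xs = k})"
proof (cases "\<exists>k. M = KSAT k \<or> M = NAESAT k")
  case True
  then obtain k where "M = KSAT k \<or> M = NAESAT k" by blast
  then have "labels M = {xs. set xs \<subseteq> {0,1} \<and> length xs = k}" by (rule labels_sat)
  then show ?thesis by (intro disjI2 exI)
next
  case False
  then have "labels M = {[]}" by (cases M) auto
  then show ?thesis by (rule disjI1)
qed

lemma labels_finite: "finite (labels M)"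
  using labels_cases[of M]
proof
  assume "labels M = {[]}" then show ?thesis by simp
next
  assume "\<exists>k. labels M = {xs. set xs \<subseteq> {0,1} \<and> length xs = k}"
  then obtain k where "labels M = {xs. set xs \<subseteq> {0,1} \<and> length xs = k}" ..
  then show ?thesis using finite_lists_length_eq[of "{0,1::nat}" k] by simp
qed

lemma labels_ne: "labels M \<noteq> {}"
proof -
  have r: "replicate k 0 \<in> {xs. set xs \<subseteq> {0, 1::nat} \<and> length xs = k}" for k by auto
  from labels_cases[of M] show ?thesis
  proof
    assume "labels M = {[]}" then show ?thesis by simp
  next
    assume "\<exists>k. labels M = {xs. set xs \<subseteq> {0,1} \<and> length xs = k}"
    then obtain k where "labels M = {xs. set xs \<subseteq> {0,1} \<and> length xs = k}" ..
    then have "replicate k 0 \<in> labels M" using r[of k] by simp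
    then show ?thesis by (metis empty_iff)
  qed
qed

lemma card_labels_pos: "card (labels M) > 0"
  using labels_finite labels_ne by (simp add: card_gt_0_iff)

definition edgesD :: "model \<Rightarrow> nat set \<Rightarrow> (nat list \<times> nat list) set" where
  "edgesD M D = {e. length e = mK M \<and> set e \<subseteq> D} \<times> labels M"

lemma edges_eq: "edges M n = edgesD M {0..<n}"
  unfolding edges_def edgesD_def ..

lemma edgesD_finite: "finite D \<Longrightarrow> finite (edgesD M D)"
proof -
  assume "finite D"
  moreover have "{e. length e = mK M \<and> set e \<subseteq> D} = {xs. set xs \<subseteq> D \<and> length xs = mK M}" by auto
  ultimately show ?thesis unfolding edgesD_def
    by (simp only:) (intro finite_cartesian_product finite_lists_length_eq labels_finite)
qed

lemma card_edgesD: "finite D \<Longrightarrow> card (edgesD M D) = card D ^ mK M * card (labels M)"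
proof -
  assume "finite D"
  moreover have "{e. length e = mK M \<and> set e \<subseteq> D} = {xs. set xs \<subseteq> D \<and> length xs = mK M}" by auto
  ultimately show ?thesis unfolding edgesD_def using labels_finite
    by (simp add: card_cartesian_product card_lists_length_eq)
qed

definition Bp :: "model \<Rightarrow> (nat \<Rightarrow> nat \<Rightarrow> nat) \<Rightarrow> nat \<Rightarrow> nat list \<times> nat list \<Rightarrow> real" where
  "Bp M X r s = (\<Prod>l<r. bad M (snd s) (map (X l) (fst s)))"

lemma edge_sum_dec:
  assumes g: "good_dec M D' r X T wt \<phi>" and D: "D \<subseteq> D'" "finite D"
  shows "(\<Sum>s\<in>edgesD M D. Bp M X r s) = real (card (labels M)) * (\<Sum>t\<in>T. wt t * (\<Sum>i\<in>D. \<phi> t i) ^ mK M)"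
proof -
  let ?L = "{xs. set xs \<subseteq> D \<and> length xs = mK M}"
  have L: "{e. length e = mK M \<and> set e \<subseteq> D} = ?L" by auto
  have finT: "finite T" using g unfolding good_dec_def by simp
  have "(\<Sum>s\<in>edgesD M D. Bp M X r s) = (\<Sum>e\<in>?L. \<Sum>a\<in>labels M. \<Prod>l<r. bad M a (map (X l) e))"
    unfolding edgesD_def L Bp_def by (subst sum.cartesian_product) (simp add: case_prod_unfold)
  also have "\<dots> = (\<Sum>e\<in>?L. real (card (labels M)) * (\<Sum>t\<in>T. wt t * prod_list (map (\<phi> t) e)))"
    using g D unfolding good_dec_def by (intro sum.cong refl) auto
  also have "\<dots> = real (card (labels M)) * (\<Sum>t\<in>T. wt t * (\<Sum>e\<in>?L. prod_list (map (\<phi> t) e)))"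
    by (simp add: sum_distrib_left) (subst sum.swap, simp add: sum_distrib_left mult_ac)
  also have "\<dots> = real (card (labels M)) * (\<Sum>t\<in>T. wt t * (\<Sum>i\<in>D. \<phi> t i) ^ mK M)"
    using D by (simp add: lists_prod_sum)
  finally show ?thesis .
qed

lemma moment_cmp_X:
  assumes vm: "valid_model M" and N: "N = N1 + N2" "N1 \<ge> 1" "N2 \<ge> 1"
  shows "(\<Sum>s\<in>edgesD M {0..<N}. Bp M X r s) / real (card (edgesD M {0..<N}))
    \<le> real N1 / real N * ((\<Sum>s\<in>edgesD M {0..<N1}. Bp M X r s) / real (card (edgesD M {0..<N1})))
     + real N2 / real N * ((\<Sum>s\<in>edgesD M {N1..<N}. Bp M X r s) / real (card (edgesD M {N1..<N})))"
proof -
  obtain T wt \<phi> where g: "good_dec M {0..<N} r X T wt \<phi>" using decomp[OF vm, where D="{0..<N}" and r=r and X=X] by auto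
  have finT: "finite T" and wt: "\<And>t. t \<in> T \<Longrightarrow> wt t \<ge> 0" and ph: "\<And>t i. t \<in> T \<Longrightarrow> \<phi> t i \<ge> 0"
    using g unfolding good_dec_def by auto
  let ?K = "mK M" let ?c = "real (card (labels M))"
  have c: "?c > 0" using card_labels_pos by simp
  have N0: "real N > 0" using N by simp
  have e0: "(\<Sum>s\<in>edgesD M {0..<N}. Bp M X r s) / real (card (edgesD M {0..<N}))
      = (\<Sum>t\<in>T. wt t * ((\<Sum>i\<in>{0..<N}. \<phi> t i) / real N) ^ ?K)"
  proof -
    have "(\<Sum>s\<in>edgesD M {0..<N}. Bp M X r s) / real (card (edgesD M {0..<N}))
        = (\<Sum>t\<in>T. wt t * (\<Sum>i\<in>{0..<N}. \<phi> t i) ^ ?K) / real N ^ ?K"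
      using c by (simp add: edge_sum_dec[OF g] card_edgesD)
    also have "\<dots> = (\<Sum>t\<in>T. wt t * ((\<Sum>i\<in>{0..<N}. \<phi> t i) / real N) ^ ?K)"
      by (simp only: power_divide) (simp add: sum_divide_distrib)
    finally show ?thesis .
  qed
  have e1: "(\<Sum>s\<in>edgesD M {0..<N1}. Bp M X r s) / real (card (edgesD M {0..<N1}))
      = (\<Sum>t\<in>T. wt t * ((\<Sum>i\<in>{0..<N1}. \<phi> t i) / real N1) ^ ?K)"
  proof -
    have "(\<Sum>s\<in>edgesD M {0..<N1}. Bp M X r s) / real (card (edgesD M {0..<N1}))
        = (\<Sum>t\<in>T. wt t * (\<Sum>i\<in>{0..<N1}. \<phi> t i) ^ ?K) / real N1 ^ ?K"
      using c N by (simp add: edge_sum_dec[OF g] card_edgesD)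
    also have "\<dots> = (\<Sum>t\<in>T. wt t * ((\<Sum>i\<in>{0..<N1}. \<phi> t i) / real N1) ^ ?K)"
      by (simp only: power_divide) (simp add: sum_divide_distrib)
    finally show ?thesis .
  qed
  have e2: "(\<Sum>s\<in>edgesD M {N1..<N}. Bp M X r s) / real (card (edgesD M {N1..<N}))
      = (\<Sum>t\<in>T. wt t * ((\<Sum>i\<in>{N1..<N}. \<phi> t i) / real N2) ^ ?K)"
  proof -
    have "(\<Sum>s\<in>edgesD M {N1..<N}. Bp M X r s) / real (card (edgesD M {N1..<N}))
        = (\<Sum>t\<in>T. wt t * (\<Sum>i\<in>{N1..<N}. \<phi> t i) ^ ?K) / real N2 ^ ?K"
      using c N by (simp add: edge_sum_dec[OF g] card_edgesD)
    also have "\<dots> = (\<Sum>t\<in>T. wt t * ((\<Sum>i\<in>{N1..<N}. \<phi> t i) / real N2) ^ ?K)"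
      by (simp only: power_divide) (simp add: sum_divide_distrib)
    finally show ?thesis .
  qed
  have split: "(\<Sum>i\<in>{0..<N}. \<phi> t i) = (\<Sum>i\<in>{0..<N1}. \<phi> t i) + (\<Sum>i\<in>{N1..<N}. \<phi> t i)" for t
    using N by (simp add: sum.atLeastLessThan_concat)
  have "wt t * ((\<Sum>i\<in>{0..<N}. \<phi> t i) / real N) ^ ?K
     \<le> real N1 / real N * (wt t * ((\<Sum>i\<in>{0..<N1}. \<phi> t i) / real N1) ^ ?K)
       + real N2 / real N * (wt t * ((\<Sum>i\<in>{N1..<N}. \<phi> t i) / real N2) ^ ?K)" if t: "t \<in> T" for t
  proof -
    let ?a = "real N1 / real N" let ?u = "(\<Sum>i\<in>{0..<N1}. \<phi> t i) / real N1"
    let ?v = "(\<Sum>i\<in>{N1..<N}. \<phi> t i) / real N2"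
    have a1: "1 - ?a = real N2 / real N" using N N0 by (simp add: field_simps)
    have "(\<Sum>i\<in>{0..<N}. \<phi> t i) / real N = ?a * ?u + (1 - ?a) * ?v"
    proof -
      have h1: "?a * ?u = (\<Sum>i\<in>{0..<N1}. \<phi> t i) / real N" using N(2) by simp
      have h2: "real N2 / real N * ?v = (\<Sum>i\<in>{N1..<N}. \<phi> t i) / real N" using N(3) by simp
      show ?thesis unfolding a1 h1 h2 split by (simp add: add_divide_distrib)
    qed
    moreover have "(?a * ?u + (1 - ?a) * ?v) ^ ?K \<le> ?a * ?u ^ ?K + (1 - ?a) * ?v ^ ?K"
      using N ph[OF t] by (intro convex_pow) (auto intro!: sum_nonneg divide_nonneg_nonneg)
    ultimately have "((\<Sum>i\<in>{0..<N}. \<phi> t i) / real N) ^ ?K \<le> ?a * ?u ^ ?K + real N2 / real N * ?v ^ ?K"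
      unfolding a1 by simp
    from mult_left_mono[OF this wt[OF t]] show ?thesis by (simp add: algebra_simps)
  qed
  then have "(\<Sum>t\<in>T. wt t * ((\<Sum>i\<in>{0..<N}. \<phi> t i) / real N) ^ ?K)
     \<le> (\<Sum>t\<in>T. real N1 / real N * (wt t * ((\<Sum>i\<in>{0..<N1}. \<phi> t i) / real N1) ^ ?K)
       + real N2 / real N * (wt t * ((\<Sum>i\<in>{N1..<N}. \<phi> t i) / real N2) ^ ?K))"
    by (rule sum_mono)
  then show ?thesis unfolding e0 e1 e2 by (simp add: sum.distrib sum_distrib_left)
qed

lemma power_sum_PiE:
  assumes "finite C"
  shows "(\<Sum>x\<in>C. f x) ^ r = (\<Sum>X\<in>PiE {..<r} (\<lambda>_. C). \<Prod>l<r. (f (X l)::real))"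
proof -
  have "(\<Sum>x\<in>C. f x) ^ r = (\<Prod>l<r. \<Sum>x\<in>C. f x)" by simp
  also have "\<dots> = (\<Sum>X\<in>PiE {..<r} (\<lambda>_. C). \<Prod>l<r. f (X l))"
    by (subst prod_sum_PiE) (use assms in auto)
  finally show ?thesis .
qed

lemma moment_cmp:
  assumes vm: "valid_model M" and N: "N = N1 + N2" "N1 \<ge> 1" "N2 \<ge> 1"
    and C: "finite C" and mu: "\<And>x. x \<in> C \<Longrightarrow> \<mu> x \<ge> 0"
  defines "y \<equiv> \<lambda>s. \<Sum>x\<in>C. \<mu> x * bad M (snd s) (map x (fst s))"
  shows "(\<Sum>s\<in>edgesD M {0..<N}. y s ^ r) / real (card (edgesD M {0..<N}))
    \<le> real N1 / real N * ((\<Sum>s\<in>edgesD M {0..<N1}. y s ^ r) / real (card (edgesD M {0..<N1})))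
     + real N2 / real N * ((\<Sum>s\<in>edgesD M {N1..<N}. y s ^ r) / real (card (edgesD M {N1..<N})))"
proof -
  let ?P = "PiE {..<r} (\<lambda>_. C)"
  have ex: "y s ^ r = (\<Sum>X\<in>?P. (\<Prod>l<r. \<mu> (X l)) * Bp M X r s)" for s
    unfolding y_def power_sum_PiE[OF C] Bp_def by (simp add: prod.distrib)
  have gen: "(\<Sum>s\<in>edgesD M D. y s ^ r) / real (card (edgesD M D))
     = (\<Sum>X\<in>?P. (\<Prod>l<r. \<mu> (X l)) * ((\<Sum>s\<in>edgesD M D. Bp M X r s) / real (card (edgesD M D))))" for D
    unfolding ex by (subst sum.swap) (simp add: sum_divide_distrib sum_distrib_left)
  have "(\<Sum>X\<in>?P. (\<Prod>l<r. \<mu> (X l)) * ((\<Sum>s\<in>edgesD M {0..<N}. Bp M X r s) / real (card (edgesD M {0..<N}))))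
     \<le> (\<Sum>X\<in>?P. (\<Prod>l<r. \<mu> (X l)) * (real N1 / real N * ((\<Sum>s\<in>edgesD M {0..<N1}. Bp M X r s) / real (card (edgesD M {0..<N1})))
     + real N2 / real N * ((\<Sum>s\<in>edgesD M {N1..<N}. Bp M X r s) / real (card (edgesD M {N1..<N})))))"
  proof (rule sum_mono, rule mult_left_mono[OF moment_cmp_X[OF vm N]])
    fix X assume "X \<in> ?P"
    then show "0 \<le> (\<Prod>l<r. \<mu> (X l))" using mu by (auto intro!: prod_nonneg)
  qed
  then show ?thesis unfolding gen by (simp add: distrib_left sum.distrib sum_distrib_left mult_ac)
qed



lemma ln_1m_sums:
  fixes z :: real
  assumes "0 \<le> z" "z < 1"
  shows "(\<lambda>n. - (z ^ n) / real n) sums ln (1 - z)"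
  using ln_series'[of "-z"] assms by simp

lemma Z_cons:
  assumes "lam > 1"
  shows "partition_fn M lam n ((e,a)#L) = Cf M lam * (partition_fn M lam n L
           - df M lam * (\<Sum>x\<in>cfg M n. wgt M lam n L x * bad M a (map x e)))"
proof -
  have "wgt M lam n ((e,a)#L) x = Cf M lam * (wgt M lam n L x - df M lam * (wgt M lam n L x * bad M a (map x e)))" for x
    unfolding wgt_def fac_def by (simp add: algebra_simps)
  then show ?thesis
    unfolding Z_eq[OF assms] by (simp add: sum_distrib_left sum_subtractf right_diff_distrib)
qed

lemma mK_pos: "valid_model M \<Longrightarrow> mK M \<ge> 1"
  by (cases M) auto

lemma key_ineq:
  assumes vm: "valid_model M" and lam: "lam > 1" and N: "N = N1 + N2" "N1 \<ge> 1" "N2 \<ge> 1"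
    and L: "\<And>e a. (e, a) \<in> set L \<Longrightarrow> set e \<subseteq> {0..<N}"
  defines "E \<equiv> edgesD M {0..<N}" and "A \<equiv> edgesD M {0..<N1}" and "B \<equiv> edgesD M {N1..<N}"
  defines "wS \<equiv> \<lambda>s. if s \<in> A then real N1 / real N / real (card A) else real N2 / real N / real (card B)"
  shows "(\<Sum>s\<in>A \<union> B. wS s * ln (partition_fn M lam N (s # L)))
       \<le> (\<Sum>s\<in>E. 1 / real (card E) * ln (partition_fn M lam N (s # L)))"
proof -
  let ?C = "cfg M N"
  define Zl where "Zl = partition_fn M lam N L"
  have Zl: "Zl > 0" unfolding Zl_def using Z_pos[OF vm lam, where L=L and n=N] L by blast
  define \<mu> where "\<mu> x = wgt M lam N L x / Zl" for x
  define y where "y s = (\<Sum>x\<in>?C. \<mu> x * bad M (snd s) (map x (fst s)))" for s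
  let ?d = "df M lam" let ?c = "Cf M lam"
  have c: "?c > 0" using Cf_pos[OF lam] .
  have d: "0 \<le> ?d" "?d \<le> 1" using df_nonneg[OF vm lam] df_le1[OF lam] .
  have mu: "\<And>x. x \<in> ?C \<Longrightarrow> \<mu> x \<ge> 0" unfolding \<mu>_def using wgt_nonneg[OF vm lam] Zl by simp
  have y0: "y s \<ge> 0" for s unfolding y_def using mu bad_nonneg by (auto intro!: sum_nonneg)
  have finC: "finite ?C" by (rule finite_cfg)
  have AE: "A \<subseteq> E" "B \<subseteq> E" unfolding A_def B_def E_def edgesD_def using N by auto
  have finE: "finite E" "finite A" "finite B" unfolding A_def B_def E_def by (auto intro: edgesD_finite)
  have cardpos: "card E > 0" "card A > 0" "card B > 0"
    unfolding A_def B_def E_def using N card_labels_pos[of M]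
    by (simp_all add: card_edgesD)
  have disj: "A \<inter> B = {}"
  proof -
    { fix e a assume "(e, a) \<in> A" "(e, a) \<in> B"
      then have "length e = mK M" "set e \<subseteq> {0..<N1}" "set e \<subseteq> {N1..<N}"
        unfolding A_def B_def edgesD_def by auto
      moreover have "e \<noteq> []" using calculation(1) mK_pos[OF vm] by auto
      ultimately have False by (cases e) auto }
    then show ?thesis by auto
  qed
  have Zs: "partition_fn M lam N (s # L) = ?c * Zl * (1 - ?d * y s)" if "s \<in> E" for s
  proof -
    obtain e a where s: "s = (e, a)" by (cases s)
    have "(\<Sum>x\<in>?C. wgt M lam N L x * bad M a (map x e)) = Zl * y s"
      unfolding y_def \<mu>_def s using Zl by (simp add: sum_distrib_left)
    then show ?thesis unfolding s Z_cons[OF lam] Zl_def[symmetric] by (simp add: algebra_simps)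
  qed
  have zpos: "1 - ?d * y s > 0" if "s \<in> E" for s
  proof -
    obtain e a where s: "s = (e, a)" by (cases s)
    have "\<And>e' a'. (e', a') \<in> set (s # L) \<Longrightarrow> set e' \<subseteq> {0..<N}"
      using that L unfolding s E_def edgesD_def by auto
    from Z_pos[OF vm lam, where L="s # L" and n=N] this Zs[OF that] mult_pos_pos[OF c Zl] show ?thesis
      by (simp add: zero_less_mult_iff)
  qed
  have lnZ: "ln (partition_fn M lam N (s # L)) = ln ?c + ln Zl + ln (1 - ?d * y s)" if "s \<in> E" for s
    using Zs[OF that] zpos[OF that] c Zl by (simp add: ln_mult)
  have wE: "(\<Sum>s\<in>E. 1 / real (card E)) = 1" using cardpos by simp
  have wAB: "(\<Sum>s\<in>A \<union> B. wS s) = 1"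
  proof -
    have "(\<Sum>s\<in>A \<union> B. wS s) = (\<Sum>s\<in>A. wS s) + (\<Sum>s\<in>B. wS s)"
      using disj finE by (simp add: sum.union_disjoint)
    also have "(\<Sum>s\<in>A. wS s) = real N1 / real N" unfolding wS_def using cardpos by simp
    also have "(\<Sum>s\<in>B. wS s) = real N2 / real N"
    proof -
      have "(\<Sum>s\<in>B. wS s) = (\<Sum>s\<in>B. real N2 / real N / real (card B))"
        unfolding wS_def using disj by (intro sum.cong) auto
      then show ?thesis using cardpos by simp
    qed
    finally show ?thesis using N by (simp add: add_divide_distrib[symmetric])
  qed
  define f where "f s = ln (1 - ?d * y s)" for s
  have ser: "(\<lambda>n. - (?d ^ n / real n) * y s ^ n) sums f s" if "s \<in> E" for s
  proof -
    have "0 \<le> ?d * y s" using d y0 by simp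
    from ln_1m_sums[OF this] zpos[OF that] show ?thesis unfolding f_def by (simp add: power_mult_distrib)
  qed
  have serE: "(\<lambda>n. - (?d ^ n / real n) * ((\<Sum>s\<in>E. y s ^ n) / real (card E))) sums (\<Sum>s\<in>E. 1 / real (card E) * f s)"
  proof -
    have "(\<lambda>n. \<Sum>s\<in>E. 1 / real (card E) * (- (?d ^ n / real n) * y s ^ n)) sums (\<Sum>s\<in>E. 1 / real (card E) * f s)"
      by (intro sums_sum sums_mult ser)
    then show ?thesis by (simp add: sum_distrib_left sum_divide_distrib mult_ac)
  qed
  have serAB: "(\<lambda>n. - (?d ^ n / real n) * (\<Sum>s\<in>A \<union> B. wS s * y s ^ n)) sums (\<Sum>s\<in>A \<union> B. wS s * f s)"
  proof -
    have "(\<lambda>n. \<Sum>s\<in>A \<union> B. wS s * (- (?d ^ n / real n) * y s ^ n)) sums (\<Sum>s\<in>A \<union> B. wS s * f s)"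
      using AE by (intro sums_sum sums_mult ser) auto
    then show ?thesis by (simp add: sum_distrib_left mult_ac)
  qed
  have mom: "(\<Sum>s\<in>E. y s ^ n) / real (card E) \<le> (\<Sum>s\<in>A \<union> B. wS s * y s ^ n)" for n
  proof -
    have "(\<Sum>s\<in>A \<union> B. wS s * y s ^ n) = (\<Sum>s\<in>A. wS s * y s ^ n) + (\<Sum>s\<in>B. wS s * y s ^ n)"
      using disj finE by (simp add: sum.union_disjoint)
    also have "(\<Sum>s\<in>A. wS s * y s ^ n) = real N1 / real N * ((\<Sum>s\<in>A. y s ^ n) / real (card A))"
      unfolding wS_def by (simp add: sum_distrib_left sum_divide_distrib)
    also have "(\<Sum>s\<in>B. wS s * y s ^ n) = real N2 / real N * ((\<Sum>s\<in>B. y s ^ n) / real (card B))"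
    proof -
      have "(\<Sum>s\<in>B. wS s * y s ^ n) = (\<Sum>s\<in>B. real N2 / real N / real (card B) * y s ^ n)"
        unfolding wS_def using disj by (intro sum.cong) auto
      then show ?thesis by (simp add: sum_distrib_left sum_divide_distrib)
    qed
    finally show ?thesis
      using moment_cmp[OF vm N finC mu, where r=n] unfolding y_def A_def B_def E_def by simp
  qed
  have fle: "(\<Sum>s\<in>A \<union> B. wS s * f s) \<le> (\<Sum>s\<in>E. 1 / real (card E) * f s)"
  proof (rule sums_le[OF _ serAB serE])
    fix n
    have "0 \<le> ?d ^ n / real n" using d by simp
    from mult_left_mono[OF mom this] show "- (?d ^ n / real n) * (\<Sum>s\<in>A \<union> B. wS s * y s ^ n)
        \<le> - (?d ^ n / real n) * ((\<Sum>s\<in>E. y s ^ n) / real (card E))" by simp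
  qed
  have eq1: "(\<Sum>s\<in>A \<union> B. wS s * ln (partition_fn M lam N (s # L)))
      = (\<Sum>s\<in>A \<union> B. wS s * (ln ?c + ln Zl)) + (\<Sum>s\<in>A \<union> B. wS s * f s)"
    using AE unfolding f_def by (subst sum.distrib[symmetric], intro sum.cong refl) (auto simp: lnZ algebra_simps)
  have eq2: "(\<Sum>s\<in>A \<union> B. wS s * (ln ?c + ln Zl)) = ln ?c + ln Zl"
    using wAB by (simp add: sum_distrib_right[symmetric])
  have eq3: "(\<Sum>s\<in>E. 1 / real (card E) * ln (partition_fn M lam N (s # L)))
      = (\<Sum>s\<in>E. 1 / real (card E) * (ln ?c + ln Zl)) + (\<Sum>s\<in>E. 1 / real (card E) * f s)"
    unfolding f_def by (subst sum.distrib[symmetric], intro sum.cong refl) (auto simp: lnZ algebra_simps)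
  have eq4: "(\<Sum>s\<in>E. 1 / real (card E) * (ln ?c + ln Zl)) = ln ?c + ln Zl"
    using wE cardpos by (simp add: sum_distrib_right[symmetric])
  show ?thesis unfolding eq1 eq2 eq3 eq4 using fle by simp
qed



lemma sum_lessThan_add: "(\<Sum>i<a+(b::nat). f i) = (\<Sum>i<a. f i) + (\<Sum>i<b. (f (a+i)::real))"
  by (induction b) (auto simp: add_ac)

lemma prod_list_filter:
  "prod_list (map f xs) = prod_list (map f (filter P xs)) * prod_list (map (f::'a \<Rightarrow> real) (filter (\<lambda>x. \<not> P x) xs))"
  by (induction xs) (auto simp: mult_ac)

definition unsh :: "nat \<Rightarrow> nat list \<times> nat list \<Rightarrow> nat list \<times> nat list" where
  "unsh k s = (map (\<lambda>i. i - k) (fst s), snd s)"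

definition sh :: "nat \<Rightarrow> nat list \<times> nat list \<Rightarrow> nat list \<times> nat list" where
  "sh k s = (map (\<lambda>i. i + k) (fst s), snd s)"

lemma Z_split:
  assumes lam: "lam > 1" and N: "N = N1 + N2"
    and ss: "\<And>s. s \<in> set ss \<Longrightarrow> s \<in> edgesD M {0..<N1} \<union> edgesD M {N1..<N}"
  shows "partition_fn M lam N ss = partition_fn M lam N1 (filter (\<lambda>s. s \<in> edgesD M {0..<N1}) ss)
           * partition_fn M lam N2 (map (unsh N1) (filter (\<lambda>s. s \<notin> edgesD M {0..<N1}) ss))"
proof -
  let ?A = "edgesD M {0..<N1}"
  define g where "g yz = (\<lambda>i. if i < N1 then fst yz i else if i < N then snd yz (i - N1) else undefined)"
    for yz :: "(nat \<Rightarrow> nat) \<times> (nat \<Rightarrow> nat)"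
  define h where "h x = (restrict x {0..<N1}, \<lambda>i\<in>{0..<N2}. x (i + N1))" for x :: "nat \<Rightarrow> nat"
  have bij: "bij_betw g (cfg M N1 \<times> cfg M N2) (cfg M N)"
  proof (rule bij_betw_byWitness[where f' = h])
    show "\<forall>a\<in>cfg M N1 \<times> cfg M N2. h (g a) = a"
      unfolding cfg_def g_def h_def using N by (auto simp: fun_eq_iff PiE_def extensional_def)
    show "\<forall>a'\<in>cfg M N. g (h a') = a'"
      unfolding cfg_def g_def h_def using N by (auto simp: fun_eq_iff PiE_def extensional_def)
    show "g ` (cfg M N1 \<times> cfg M N2) \<subseteq> cfg M N"
      unfolding cfg_def g_def using N by (auto simp: PiE_def extensional_def Pi_def)
    show "h ` cfg M N \<subseteq> cfg M N1 \<times> cfg M N2"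
      unfolding cfg_def h_def using N by (auto simp: PiE_def extensional_def Pi_def)
  qed
  have w: "wgt M lam N ss (g (y, z)) = wgt M lam N1 (filter (\<lambda>s. s \<in> ?A) ss) y
       * wgt M lam N2 (map (unsh N1) (filter (\<lambda>s. s \<notin> ?A) ss)) z" for y z
  proof -
    have nodes: "(\<Sum>i<N. nodeval M (g (y, z) i)) = (\<Sum>i<N1. nodeval M (y i)) + (\<Sum>i<N2. nodeval M (z i))"
    proof -
      have "(\<Sum>i<N1. nodeval M (g (y, z) i)) = (\<Sum>i<N1. nodeval M (y i))"
        by (rule sum.cong) (auto simp: g_def)
      moreover have "(\<Sum>i<N2. nodeval M (g (y, z) (N1 + i))) = (\<Sum>i<N2. nodeval M (z i))"
        by (rule sum.cong) (auto simp: g_def N)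
      ultimately show ?thesis unfolding N sum_lessThan_add by simp
    qed
    let ?F = "\<lambda>x. (\<lambda>(e, a). fac M lam a (map x e))"
    have pA: "prod_list (map (?F (g (y, z))) (filter (\<lambda>s. s \<in> ?A) ss)) = prod_list (map (?F y) (filter (\<lambda>s. s \<in> ?A) ss))"
    proof (rule arg_cong[where f=prod_list], rule map_cong[OF refl])
      fix s assume "s \<in> set (filter (\<lambda>s. s \<in> ?A) ss)"
      then obtain e a where s: "s = (e, a)" "set e \<subseteq> {0..<N1}" unfolding edgesD_def by auto
      then have mE: "map (g (y, z)) e = map y e" by (auto simp: g_def)
      show "?F (g (y, z)) s = ?F y s" using s(1) by (simp add: mE)
    qed
    have pB: "prod_list (map (?F (g (y, z))) (filter (\<lambda>s. s \<notin> ?A) ss)) = prod_list (map (?F z) (map (unsh N1) (filter (\<lambda>s. s \<notin> ?A) ss)))"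
      unfolding map_map
    proof (rule arg_cong[where f=prod_list], rule map_cong[OF refl])
      fix s assume "s \<in> set (filter (\<lambda>s. s \<notin> ?A) ss)"
      then have "s \<in> set ss" "s \<notin> ?A" by auto
      then have "s \<in> edgesD M {N1..<N}" using ss by blast
      then obtain e a where s: "s = (e, a)" "set e \<subseteq> {N1..<N}" unfolding edgesD_def by auto
      then have mE: "map (g (y, z)) e = map z (map (\<lambda>i. i - N1) e)" by (auto simp: g_def)
      show "?F (g (y, z)) s = (?F z \<circ> unsh N1) s" using s(1) by (simp add: unsh_def mE del: map_map)
    qed
    show ?thesis
      unfolding wgt_def nodes
      apply (subst prod_list_filter[where P="\<lambda>s. s \<in> ?A"])
      unfolding pA pB using lam by (simp add: powr_add mult_ac)
  qed
  have "partition_fn M lam N ss = (\<Sum>x\<in>cfg M N. wgt M lam N ss x)" by (rule Z_eq[OF lam])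
  also have "\<dots> = (\<Sum>yz\<in>cfg M N1 \<times> cfg M N2. wgt M lam N ss (g yz))"
    by (rule sum.reindex_bij_betw[OF bij, symmetric])
  also have "\<dots> = (\<Sum>y\<in>cfg M N1. \<Sum>z\<in>cfg M N2. wgt M lam N1 (filter (\<lambda>s. s \<in> ?A) ss) y
       * wgt M lam N2 (map (unsh N1) (filter (\<lambda>s. s \<notin> ?A) ss)) z)"
    unfolding sum.cartesian_product by (intro sum.cong refl) (auto simp: w)
  also have "\<dots> = partition_fn M lam N1 (filter (\<lambda>s. s \<in> ?A) ss)
           * partition_fn M lam N2 (map (unsh N1) (filter (\<lambda>s. s \<notin> ?A) ss))"
    unfolding Z_eq[OF lam] by (simp add: sum_product)
  finally show ?thesis .
qed



lemma Z_perm: "partition_fn M lam n (ws @ s # ss) = partition_fn M lam n (s # ws @ ss)"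
  unfolding partition_fn_def hamiltonian_def by (simp add: add_ac)

lemma edges_ne: "valid_model M \<Longrightarrow> n \<ge> 1 \<Longrightarrow> edges M n \<noteq> {}"
proof -
  assume n: "n \<ge> 1"
  obtain a where "a \<in> labels M" using labels_ne by blast
  then have "(replicate (mK M) 0, a) \<in> edges M n" using n unfolding edges_def by auto
  then show ?thesis by (metis empty_iff)
qed

lemma ElogZ_seqE:
  assumes vm: "valid_model M" and n: "n \<ge> 1"
  shows "ElogZ M lam n m = seqE (edges M n) (\<lambda>_. 1 / real (card (edges M n))) m (\<lambda>G. ln (partition_fn M lam n G))"
proof -
  let ?E = "edges M n"
  have finE: "finite ?E" unfolding edges_eq by (simp add: edgesD_finite)
  have neE: "?E \<noteq> {}" using edges_ne[OF vm n] .
  have S: "{G. length G = m \<and> set G \<subseteq> ?E} = {xs. set xs \<subseteq> ?E \<and> length xs = m}" by auto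
  have finS: "finite {xs. set xs \<subseteq> ?E \<and> length xs = m}" using finE by (rule finite_lists_length_eq)
  obtain e0 where "e0 \<in> ?E" using neE by blast
  then have "replicate m e0 \<in> {xs. set xs \<subseteq> ?E \<and> length xs = m}" by auto
  then have neS: "{xs. set xs \<subseteq> ?E \<and> length xs = m} \<noteq> {}" by (metis empty_iff)
  have "ElogZ M lam n m = (\<Sum>G\<in>{xs. set xs \<subseteq> ?E \<and> length xs = m}. ln (partition_fn M lam n G))
         / real (card {xs. set xs \<subseteq> ?E \<and> length xs = m})"
    unfolding ElogZ_def rand_graph_def S by (rule integral_pmf_of_set[OF neS finS])
  also have "\<dots> = seqE ?E (\<lambda>_. 1 / real (card ?E)) m (\<lambda>G. ln (partition_fn M lam n G))"
    by (simp add: seqE_uniform[OF finE] card_lists_length_eq[OF finE])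
  finally show ?thesis .
qed

lemma main:
  assumes vm: "valid_model M" and lam: "lam > 1" and N: "N = N1 + N2" "N1 \<ge> 1" "N2 \<ge> 1"
  shows "(\<Sum>k\<le>m. real (m choose k) * ((real N1 / real N)^k * (real N2 / real N)^(m-k)
            * (ElogZ M lam N1 k + ElogZ M lam N2 (m-k)))) \<le> ElogZ M lam N m"
proof -
  define E where "E = edgesD M {0..<N}"
  define A where "A = edgesD M {0..<N1}"
  define B where "B = edgesD M {N1..<N}"
  define E2 where "E2 = edgesD M {0..<N2}"
  define pa where "pa = real N1 / real N"
  define pb where "pb = real N2 / real N"
  define wa where "wa = (\<lambda>_::nat list \<times> nat list. 1 / real (card A))"
  define wb where "wb = (\<lambda>_::nat list \<times> nat list. 1 / real (card B))"
  define wS where "wS = (\<lambda>s. if s \<in> A then real N1 / real N / real (card A) else real N2 / real N / real (card B))"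
  define uE where "uE = (\<lambda>_::nat list \<times> nat list. 1 / real (card E))"
  define lnZ where "lnZ n G = ln (partition_fn M lam n G)" for n G
  define I where "I r = seqE E uE r (\<lambda>ws. seqE (A \<union> B) wS (m - r) (\<lambda>ss. lnZ N (ws @ ss)))" for r
  have finE: "finite E" "finite A" "finite B" "finite E2" unfolding A_def B_def E_def E2_def by (auto intro: edgesD_finite)
  have cardpos: "card E > 0" "card A > 0" "card B > 0"
    unfolding A_def B_def E_def using N card_labels_pos[of M] by (simp_all add: card_edgesD)
  have AE: "A \<subseteq> E" "B \<subseteq> E" unfolding A_def B_def E_def edgesD_def using N by auto
  have disj: "A \<inter> B = {}"
  proof -
    { fix e a assume "(e, a) \<in> A" "(e, a) \<in> B"
      then have "length e = mK M" "set e \<subseteq> {0..<N1}" "set e \<subseteq> {N1..<N}"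
        unfolding A_def B_def edgesD_def by auto
      moreover have "e \<noteq> []" using calculation(1) mK_pos[OF vm] by auto
      ultimately have False by (cases e) auto }
    then show ?thesis by auto
  qed
  have wS0: "\<And>s. s \<in> A \<union> B \<Longrightarrow> wS s \<ge> 0" unfolding wS_def by auto
  have uE0: "\<And>s. s \<in> E \<Longrightarrow> uE s \<ge> 0" unfolding uE_def by auto
  have nodesE: "set e \<subseteq> {0..<N}" if "(e, a) \<in> E" for e a using that unfolding E_def edgesD_def by auto
  have step: "I r \<le> I (Suc r)" if r: "r < m" for r
  proof -
    obtain k where k: "m - r = Suc k" "m - Suc r = k" using r by (metis Suc_diff_Suc)
    have "I (Suc r) = (\<Sum>w\<in>E. uE w * seqE E uE r (\<lambda>ws. seqE (A \<union> B) wS k (\<lambda>ss. lnZ N (w # ws @ ss))))"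
      unfolding I_def k by simp
    also have "\<dots> = seqE E uE r (\<lambda>ws. \<Sum>w\<in>E. uE w * seqE (A \<union> B) wS k (\<lambda>ss. lnZ N (w # ws @ ss)))"
      by (simp add: seqE_sum[OF finE(1)] seqE_cmult)
    also have "\<dots> = seqE E uE r (\<lambda>ws. seqE (A \<union> B) wS k (\<lambda>ss. \<Sum>w\<in>E. uE w * lnZ N (w # ws @ ss)))"
      by (simp add: seqE_sum[OF finE(1)] seqE_cmult)
    finally have I1: "I (Suc r) = \<dots>" .
    have "I r = seqE E uE r (\<lambda>ws. \<Sum>s\<in>A \<union> B. wS s * seqE (A \<union> B) wS k (\<lambda>ss. lnZ N (ws @ s # ss)))"
      unfolding I_def k by simp
    also have "\<dots> = seqE E uE r (\<lambda>ws. seqE (A \<union> B) wS k (\<lambda>ss. \<Sum>s\<in>A \<union> B. wS s * lnZ N (ws @ s # ss)))"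
      using finE by (simp add: seqE_sum seqE_cmult)
    finally have I0: "I r = \<dots>" .
    show ?thesis unfolding I0 I1
    proof (intro seqE_mono uE0 wS0)
      fix ws ss assume ws: "set ws \<subseteq> E" and ss: "set ss \<subseteq> A \<union> B"
      have L: "set e \<subseteq> {0..<N}" if "(e, a) \<in> set (ws @ ss)" for e a
      proof -
        have "(e, a) \<in> E" using that ws ss AE by auto
        then show ?thesis by (rule nodesE)
      qed
      have "(\<Sum>s\<in>A \<union> B. wS s * lnZ N (ws @ s # ss)) = (\<Sum>s\<in>A \<union> B. wS s * lnZ N (s # (ws @ ss)))"
        unfolding lnZ_def Z_perm ..
      also have "\<dots> \<le> (\<Sum>w\<in>E. uE w * lnZ N (w # (ws @ ss)))"
        unfolding lnZ_def wS_def uE_def A_def B_def E_def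
        by (rule key_ineq[OF vm lam N L])
      finally show "(\<Sum>s\<in>A \<union> B. wS s * lnZ N (ws @ s # ss)) \<le> (\<Sum>w\<in>E. uE w * lnZ N (w # ws @ ss))" by simp
    qed
  qed
  have chain: "j \<le> m \<Longrightarrow> I 0 \<le> I j" for j
  proof (induction j)
    case (Suc j)
    then have "I 0 \<le> I j" "I j \<le> I (Suc j)" using step[of j] by auto
    then show ?case by (rule order_trans)
  qed simp
  have Im: "I m = ElogZ M lam N m"
  proof -
    have N1': "N \<ge> 1" using N by simp
    show ?thesis unfolding I_def ElogZ_seqE[OF vm N1'] by (simp add: E_def edges_eq uE_def lnZ_def)
  qed
  have wS': "wS = (\<lambda>e. if e \<in> A then pa * wa e else pb * wb e)"
    unfolding wS_def pa_def pb_def wa_def wb_def by auto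
  have fac: "lnZ N ss = lnZ N1 (filter (\<lambda>s. s \<in> A) ss) + lnZ N2 (map (unsh N1) (filter (\<lambda>s. s \<notin> A) ss))"
    if ss: "set ss \<subseteq> A \<union> B" for ss
  proof -
    have sp: "partition_fn M lam N ss = partition_fn M lam N1 (filter (\<lambda>s. s \<in> A) ss)
           * partition_fn M lam N2 (map (unsh N1) (filter (\<lambda>s. s \<notin> A) ss))"
      unfolding A_def by (rule Z_split[OF lam N(1)]) (use ss in \<open>auto simp: A_def B_def\<close>)
    have p1: "partition_fn M lam N1 (filter (\<lambda>s. s \<in> A) ss) > 0"
      by (rule Z_pos[OF vm lam]) (auto simp: A_def edgesD_def)
    have p2: "partition_fn M lam N2 (map (unsh N1) (filter (\<lambda>s. s \<notin> A) ss)) > 0"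
    proof (rule Z_pos[OF vm lam])
      fix e a assume "(e, a) \<in> set (map (unsh N1) (filter (\<lambda>s. s \<notin> A) ss))"
      then obtain e' where "(e', a) \<in> B" "e = map (\<lambda>i. i - N1) e'" using ss by (auto simp: unsh_def)
      then show "set e \<subseteq> {0..<N2}" using N unfolding B_def edgesD_def by (force simp: subset_iff)
    qed
    show ?thesis unfolding lnZ_def sp using p1 p2 by (simp add: ln_mult)
  qed
  have sumA: "sum wa A = 1" "sum wb B = 1" unfolding wa_def wb_def using cardpos by auto
  have Bimg: "B = sh N1 ` E2"
  proof
    show "sh N1 ` E2 \<subseteq> B"
    proof
      fix s assume "s \<in> sh N1 ` E2"
      then obtain e a where s: "s = (map (\<lambda>i. i + N1) e, a)" "length e = mK M" "set e \<subseteq> {0..<N2}" "a \<in> labels M"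
        unfolding E2_def edgesD_def sh_def by auto
      have "set (map (\<lambda>i. i + N1) e) \<subseteq> {N1..<N}"
      proof
        fix j assume "j \<in> set (map (\<lambda>i. i + N1) e)"
        then obtain i where "i \<in> set e" "j = i + N1" by auto
        then show "j \<in> {N1..<N}" using s(3) N by auto
      qed
      then show "s \<in> B" unfolding B_def edgesD_def using s by simp
    qed
    show "B \<subseteq> sh N1 ` E2"
    proof
      fix s assume "s \<in> B"
      then obtain e a where s: "s = (e, a)" "length e = mK M" "set e \<subseteq> {N1..<N}" "a \<in> labels M"
        unfolding B_def edgesD_def by auto
      have "map (\<lambda>i. i + N1) (map (\<lambda>i. i - N1) e) = e" unfolding map_map
      proof (rule map_idI)
        fix i assume "i \<in> set e"
        then have "N1 \<le> i" using s(3) by auto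
        then show "((\<lambda>i. i + N1) \<circ> (\<lambda>i. i - N1)) i = i" by simp
      qed
      moreover have "(map (\<lambda>i. i - N1) e, a) \<in> E2"
      proof -
        have "set (map (\<lambda>i. i - N1) e) \<subseteq> {0..<N2}"
        proof
          fix j assume "j \<in> set (map (\<lambda>i. i - N1) e)"
          then obtain i where i: "i \<in> set e" "j = i - N1" by auto
          then have "N1 \<le> i" "i < N" using s(3) by auto
          then show "j \<in> {0..<N2}" using i N by auto
        qed
        then show ?thesis using s unfolding E2_def edgesD_def by simp
      qed
      ultimately show "s \<in> sh N1 ` E2" unfolding s sh_def
        by (intro image_eqI[where x="(map (\<lambda>i. i - N1) e, a)"]) simp_all
    qed
  qed
  have inj: "inj_on (sh N1) E2"
  proof -
    have "inj (\<lambda>i::nat. i + N1)" by (simp add: inj_def)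
    then show ?thesis unfolding inj_on_def sh_def by (auto simp: inj_map_eq_map prod_eq_iff)
  qed
  have EB: "seqE B wb j (\<lambda>G2. lnZ N2 (map (unsh N1) G2)) = ElogZ M lam N2 j" for j
  proof -
    have cB: "card B = card E2" unfolding Bimg using inj by (simp add: card_image)
    have us: "map (unsh N1) (map (sh N1) ss) = ss" for ss by (induction ss) (auto simp: unsh_def sh_def comp_def)
    show ?thesis
      unfolding ElogZ_seqE[OF vm N(3)] Bimg seqE_image[OF inj] us
      by (simp add: wb_def comp_def cB E2_def edges_eq lnZ_def)
  qed
  have EA: "seqE A wa k (lnZ N1) = ElogZ M lam N1 k" for k
    unfolding ElogZ_seqE[OF vm N(2)] by (simp add: A_def wa_def edges_eq lnZ_def[abs_def])
  have "I 0 = seqE (A \<union> B) wS m (\<lambda>ss. lnZ N ss)" unfolding I_def by simp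
  also have "\<dots> = seqE (A \<union> B) wS m (\<lambda>ss. (\<lambda>G1 G2. lnZ N1 G1 + lnZ N2 (map (unsh N1) G2))
                      (filter (\<lambda>s. s \<in> A) ss) (filter (\<lambda>s. s \<notin> A) ss))"
    by (rule seqE_cong) (simp add: fac)
  also have "\<dots> = (\<Sum>k\<le>m. real (m choose k) * (pa^k * pb^(m-k) * seqE A wa k (\<lambda>G1. seqE B wb (m-k)
                      (\<lambda>G2. lnZ N1 G1 + lnZ N2 (map (unsh N1) G2)))))"
    unfolding wS' by (rule seqE_union[OF disj finE(2,3)])
  also have "\<dots> = (\<Sum>k\<le>m. real (m choose k) * (pa^k * pb^(m-k) * (ElogZ M lam N1 k + ElogZ M lam N2 (m-k))))"
  proof (rule sum.cong[OF refl])
    fix k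
    have "seqE A wa k (\<lambda>G1. seqE B wb (m-k) (\<lambda>G2. lnZ N1 G1 + lnZ N2 (map (unsh N1) G2)))
        = seqE A wa k (\<lambda>G1. lnZ N1 G1 + ElogZ M lam N2 (m-k))"
      by (simp add: seqE_add seqE_const sumA EB)
    also have "\<dots> = ElogZ M lam N1 k + ElogZ M lam N2 (m-k)"
      by (simp add: seqE_add seqE_const sumA EA)
    finally show "real (m choose k) * (pa^k * pb^(m-k) * seqE A wa k (\<lambda>G1. seqE B wb (m-k)
                      (\<lambda>G2. lnZ N1 G1 + lnZ N2 (map (unsh N1) G2))))
        = real (m choose k) * (pa^k * pb^(m-k) * (ElogZ M lam N1 k + ElogZ M lam N2 (m-k)))" by simp
  qed
  finally have I0: "I 0 = \<dots>" .
  show ?thesis using chain[of m] unfolding I0 Im pa_def pb_def by simp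
qed



theorem theorem6:
  fixes M :: model and c lam :: real and N N1 N2 :: nat
  assumes "valid_model M" and "c > 0" and "lam > 1"
    and "1 \<le> N1" and "N1 \<le> N - 1" and "1 \<le> N2" and "N2 \<le> N - 1" and "N1 + N2 = N"
  shows "ElogZ M lam N (nat \<lfloor>c * real N\<rfloor>)
    \<ge> measure_pmf.expectation (binomial_pmf (nat \<lfloor>c * real N\<rfloor>) (real N1 / real N))
          (\<lambda>m1. ElogZ M lam N1 m1)
      + measure_pmf.expectation (binomial_pmf (nat \<lfloor>c * real N\<rfloor>) (real N1 / real N))
          (\<lambda>m1. ElogZ M lam N2 (nat \<lfloor>c * real N\<rfloor> - m1))"
proof -
  define m where "m = nat \<lfloor>c * real N\<rfloor>"
  have N: "N = N1 + N2" using assms(8) by simp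
  have p: "real N1 / real N \<in> {0..1}" using N assms(4) by (auto simp: divide_le_eq_1)
  have q: "1 - real N1 / real N = real N2 / real N" using N assms(4) by (simp add: field_simps)
  have "measure_pmf.expectation (binomial_pmf m (real N1 / real N)) (\<lambda>m1. ElogZ M lam N1 m1)
      + measure_pmf.expectation (binomial_pmf m (real N1 / real N)) (\<lambda>m1. ElogZ M lam N2 (m - m1))
      = (\<Sum>k\<le>m. real (m choose k) * ((real N1 / real N)^k * (real N2 / real N)^(m-k)
            * (ElogZ M lam N1 k + ElogZ M lam N2 (m-k))))"
    unfolding expectation_binomial_pmf'[OF p] q
    by (simp add: sum.distrib[symmetric] algebra_simps)
  also have "\<dots> \<le> ElogZ M lam N m"
    by (rule main[OF assms(1,3) N assms(4,6)])
  finally show ?thesis unfolding m_def by simp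
qed

end
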